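(* Let $R$ be a commutative ring with nonzero identity and $\delta$ an expansion of ideals of $R$. (1) Let $I$ be a $\delta$-primary ideal of $R$ with $\delta(I)\neq R$. Then $I$ is a $\delta$-$n$-ideal of $R$ if and only if $I\subseteq\sqrt{0}$. (2) Let $I$ be a prime ideal of $R$ with $\delta(I)\neq R$. Then $I$ is a $\delta$-$n$-ideal of $R$ if and only if $I=\sqrt{0}$.
   Context: An expansion of ideals of a ring $R$ is a map $\delta$ from the set of ideals of $R$ to itself such that $I\subseteq\delta(I)$ for every ideal $I$, and $\delta(I)\subseteq\delta(J)$ whenever $I\subseteq J$. $\sqrt{0}$ denotes the nilradical of $R$. Given an expansion $\delta$, a proper ideal $I$ of $R$ is a $\delta$-$n$-ideal if whenever $a,b\in R$ with $ab\in I$ and $a\notin\sqrt{0}$, then $b\in\delta(I)$; it is $\delta$-primary if whenever $a,b\in R$ with $ab\in I$ and $a\notin I$, then $b\in\delta(I)$. *)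

theory Defs
  imports "HOL-Algebra.Ideal"
begin

definition nilradical :: "('a, 'b) ring_scheme \<Rightarrow> 'a set" where
  "nilradical R = {a \<in> carrier R. \<exists>n::nat. a [^]\<^bsub>R\<^esub> n = \<zero>\<^bsub>R\<^esub>}"

definition expansion :: "('a, 'b) ring_scheme \<Rightarrow> ('a set \<Rightarrow> 'a set) \<Rightarrow> bool" where
  "expansion R \<delta> \<longleftrightarrow>
     (\<forall>I. ideal I R \<longrightarrow> ideal (\<delta> I) R \<and> I \<subseteq> \<delta> I) \<and>
     (\<forall>I J. ideal I R \<longrightarrow> ideal J R \<longrightarrow> I \<subseteq> J \<longrightarrow> \<delta> I \<subseteq> \<delta> J)"

definition delta_n_ideal :: "('a, 'b) ring_scheme \<Rightarrow> ('a set \<Rightarrow> 'a set) \<Rightarrow> 'a set \<Rightarrow> bool" where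
  "delta_n_ideal R \<delta> I \<longleftrightarrow> ideal I R \<and> I \<noteq> carrier R \<and>
     (\<forall>a \<in> carrier R. \<forall>b \<in> carrier R.
        a \<otimes>\<^bsub>R\<^esub> b \<in> I \<longrightarrow> a \<notin> nilradical R \<longrightarrow> b \<in> \<delta> I)"

definition delta_primary :: "('a, 'b) ring_scheme \<Rightarrow> ('a set \<Rightarrow> 'a set) \<Rightarrow> 'a set \<Rightarrow> bool" where
  "delta_primary R \<delta> I \<longleftrightarrow> ideal I R \<and> I \<noteq> carrier R \<and>
     (\<forall>a \<in> carrier R. \<forall>b \<in> carrier R.
        a \<otimes>\<^bsub>R\<^esub> b \<in> I \<longrightarrow> a \<notin> I \<longrightarrow> b \<in> \<delta> I)"

end

theory Submission
  imports Defs
begin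

lemma expansion_ideal:
  assumes "expansion R \<delta>" "ideal I R"
  shows "ideal (\<delta> I) R" "I \<subseteq> \<delta> I"
proof -
  have "\<forall>I. ideal I R \<longrightarrow> ideal (\<delta> I) R \<and> I \<subseteq> \<delta> I"
    using assms(1) unfolding expansion_def by (rule conjunct1)
  then have "ideal (\<delta> I) R \<and> I \<subseteq> \<delta> I" using assms(2) by simp
  then show "ideal (\<delta> I) R" "I \<subseteq> \<delta> I" by simp_all
qed

lemma nil_sub_aux:
  fixes R (structure)
  assumes "cring R" "expansion R \<delta>" "ideal I R" "\<delta> I \<noteq> carrier R"
    and H: "\<forall>a \<in> carrier R. \<forall>b \<in> carrier R.
        a \<otimes> b \<in> I \<longrightarrow> a \<notin> nilradical R \<longrightarrow> b \<in> \<delta> I"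
  shows "I \<subseteq> nilradical R"
proof
  fix a assume a: "a \<in> I"
  have ac: "a \<in> carrier R" using ideal.Icarr[OF assms(3) a] .
  have di: "ideal (\<delta> I) R" using expansion_ideal[OF assms(2,3)] by simp
  have oc: "\<one> \<in> carrier R" using assms(1) by (metis cring_def ring_def monoid.one_closed)
  have r1: "a \<otimes> \<one> = a" using assms(1) ac by (metis cring_def ring_def monoid.r_one)
  show "a \<in> nilradical R"
  proof (rule ccontr)
    assume na: "a \<notin> nilradical R"
    have "a \<otimes> \<one> \<in> I" using a r1 by simp
    then have "\<one> \<in> \<delta> I" using H ac oc na by simp
    then show False using ideal.one_imp_carrier[OF di] assms(4) by simp
  qed
qed

lemma prime_pow:
  fixes R (structure)
  assumes p: "primeideal I R" and ac: "a \<in> carrier R"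
  shows "a [^] (n::nat) \<in> I \<Longrightarrow> a \<in> I"
proof (induction n)
  case 0
  have cr: "cring R" using p primeideal.axioms(2) by blast
  have id: "ideal I R" using p primeideal.axioms(1) by blast
  have "a [^] (0::nat) = \<one>" using cr cring.axioms(1) ring.axioms(2) monoid.nat_pow_0
    by (metis cring_def ring_def)
  then have "\<one> \<in> I" using 0 by simp
  then have "I = carrier R" using ideal.one_imp_carrier[OF id] by blast
  then show ?case using primeideal.I_notcarr[OF p] by blast
next
  case (Suc n)
  have cr: "cring R" using p primeideal.axioms(2) by blast
  have "a [^] Suc n = a [^] n \<otimes> a" using cr
    by (metis cring_def ring_def monoid.nat_pow_Suc)
  then have "a [^] n \<otimes> a \<in> I" using Suc.prems by simp
  moreover have "a [^] n \<in> carrier R" using cr ac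
    by (metis cring_def ring_def monoid.nat_pow_closed)
  ultimately have "a [^] n \<in> I \<or> a \<in> I" using primeideal.I_prime[OF p, of "a [^] n" a] ac by blast
  then show ?case using Suc.IH by blast
qed

theorem proposition2p6:
  fixes R (structure) and \<delta> :: "'a set \<Rightarrow> 'a set"
  assumes "cring R" and "\<one> \<noteq> \<zero>" and "expansion R \<delta>"
  shows "(\<forall>I. delta_primary R \<delta> I \<longrightarrow> \<delta> I \<noteq> carrier R \<longrightarrow>
            (delta_n_ideal R \<delta> I \<longleftrightarrow> I \<subseteq> nilradical R))
       \<and> (\<forall>I. primeideal I R \<longrightarrow> \<delta> I \<noteq> carrier R \<longrightarrow>
            (delta_n_ideal R \<delta> I \<longleftrightarrow> I = nilradical R))"
proof (intro conjI allI impI)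
  fix I assume p: "delta_primary R \<delta> I" and d: "\<delta> I \<noteq> carrier R"
  have p1: "ideal I R" and p2: "I \<noteq> carrier R" and
    p3: "\<forall>a \<in> carrier R. \<forall>b \<in> carrier R. a \<otimes> b \<in> I \<longrightarrow> a \<notin> I \<longrightarrow> b \<in> \<delta> I"
    using p unfolding delta_primary_def by auto
  show "delta_n_ideal R \<delta> I \<longleftrightarrow> I \<subseteq> nilradical R"
  proof
    assume "delta_n_ideal R \<delta> I"
    then have "\<forall>a \<in> carrier R. \<forall>b \<in> carrier R.
        a \<otimes> b \<in> I \<longrightarrow> a \<notin> nilradical R \<longrightarrow> b \<in> \<delta> I"
      unfolding delta_n_ideal_def by auto
    then show "I \<subseteq> nilradical R" using nil_sub_aux[OF assms(1,3) p1 d] by auto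
  next
    assume s: "I \<subseteq> nilradical R"
    have "\<forall>a \<in> carrier R. \<forall>b \<in> carrier R.
        a \<otimes> b \<in> I \<longrightarrow> a \<notin> nilradical R \<longrightarrow> b \<in> \<delta> I"
    proof (intro ballI impI)
      fix a b assume "a \<in> carrier R" "b \<in> carrier R" "a \<otimes> b \<in> I" "a \<notin> nilradical R"
      moreover have "a \<notin> I" using s \<open>a \<notin> nilradical R\<close> by auto
      ultimately show "b \<in> \<delta> I" using p3 by auto
    qed
    then show "delta_n_ideal R \<delta> I" unfolding delta_n_ideal_def using p1 p2 by auto
  qed
next
  fix I assume p: "primeideal I R" and d: "\<delta> I \<noteq> carrier R"
  interpret primeideal I R by fact
  have sub: "I \<subseteq> \<delta> I" using expansion_ideal(2)[OF assms(3) is_ideal] .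
  show "delta_n_ideal R \<delta> I \<longleftrightarrow> I = nilradical R"
  proof
    assume "delta_n_ideal R \<delta> I"
    then have "\<forall>a \<in> carrier R. \<forall>b \<in> carrier R.
        a \<otimes> b \<in> I \<longrightarrow> a \<notin> nilradical R \<longrightarrow> b \<in> \<delta> I"
      unfolding delta_n_ideal_def by auto
    then have "I \<subseteq> nilradical R" using nil_sub_aux[OF assms(1,3) is_ideal d] by auto
    moreover have "nilradical R \<subseteq> I"
    proof
      fix a assume "a \<in> nilradical R"
      then obtain n :: nat where ac: "a \<in> carrier R" and an: "a [^] n = \<zero>"
        unfolding nilradical_def by blast
      have "\<zero> \<in> I" by (rule additive_subgroup.zero_closed[OF is_additive_subgroup])
      then have "a [^] n \<in> I" using an by simp
      then show "a \<in> I" using prime_pow[OF p ac] by blast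
    qed
    ultimately show "I = nilradical R" by blast
  next
    assume e: "I = nilradical R"
    have "\<forall>a \<in> carrier R. \<forall>b \<in> carrier R.
        a \<otimes> b \<in> I \<longrightarrow> a \<notin> nilradical R \<longrightarrow> b \<in> \<delta> I"
    proof (intro ballI impI)
      fix a b assume "a \<in> carrier R" "b \<in> carrier R" "a \<otimes> b \<in> I" "a \<notin> nilradical R"
      then have "b \<in> I" using I_prime[of a b] e by blast
      then show "b \<in> \<delta> I" using sub by blast
    qed
    then show "delta_n_ideal R \<delta> I" unfolding delta_n_ideal_def
      using is_ideal I_notcarr by auto
  qed
qed

end
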